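(* Let $f:[0,1]\to(0,\infty)$ be a continuous completely non-Hölder function. Let $\mathcal{A}\subseteq C^0([0,1])$ be the (not necessarily unital) real algebra generated by $\{f^\lambda:\lambda>0\}$, i.e. the set of finite linear combinations of finite products of the functions $f^\lambda$, $\lambda>0$. Then $\mathcal{A}$ has dimension $2^{\aleph_0}$ as a real vector space, and no non-zero element of $\mathcal{A}$ has a finite one-sided derivative at any point of $[0,1]$.
   Context: For $\alpha>0$, a function $g:[0,1]\to\mathbb{R}$ is called $\alpha$-Hölder at $x_0$ from the right if $\limsup_{y\searrow x_0}\frac{|g(y)-g(x_0)|}{|y-x_0|^\alpha}<\infty$, and $\alpha$-Hölder at $x_0$ from the left if $\limsup_{y\nearrow x_0}\frac{|g(y)-g(x_0)|}{|y-x_0|^\alpha}<\infty$. The function $g$ is called completely non-Hölder if there is no $x_0\in[0,1]$ and no $\alpha>0$ such that $g$ is $\alpha$-Hölder at $x_0$ from the left or from the right. *)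

theory Defs
  imports "HOL-Analysis.Analysis" "HOL-Library.Equipollence" "HOL-Library.Function_Algebras"
begin

text \<open>Functions on [0,1] are represented as functions real => real; only values on
  [0,1] matter.  alpha-Hoelder from the right at x0 (for x0 < 1) and from the left at x0
  (for x0 > 0), with y ranging over [0,1], via the library Limsup on extended reals.\<close>

definition holder_right :: "real \<Rightarrow> (real \<Rightarrow> real) \<Rightarrow> real \<Rightarrow> bool" where
  "holder_right \<alpha> g x0 \<longleftrightarrow>
     Limsup (at x0 within {x0<..1}) (\<lambda>y. ereal (\<bar>g y - g x0\<bar> / \<bar>y - x0\<bar> powr \<alpha>)) < \<infinity>"

definition holder_left :: "real \<Rightarrow> (real \<Rightarrow> real) \<Rightarrow> real \<Rightarrow> bool" where
  "holder_left \<alpha> g x0 \<longleftrightarrow>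
     Limsup (at x0 within {0..<x0}) (\<lambda>y. ereal (\<bar>g y - g x0\<bar> / \<bar>y - x0\<bar> powr \<alpha>)) < \<infinity>"

definition completely_non_holder :: "(real \<Rightarrow> real) \<Rightarrow> bool" where
  "completely_non_holder g \<longleftrightarrow>
     \<not> (\<exists>x0\<in>{0..1}. \<exists>\<alpha>>0.
          (x0 < 1 \<and> holder_right \<alpha> g x0) \<or> (0 < x0 \<and> holder_left \<alpha> g x0))"

definition fpow :: "(real \<Rightarrow> real) \<Rightarrow> real \<Rightarrow> real \<Rightarrow> real" where
  "fpow f l = (\<lambda>x. if x \<in> {0..1} then f x powr l else 0)"

inductive_set gen_algebra :: "(real \<Rightarrow> real) set \<Rightarrow> (real \<Rightarrow> real) set"
  for G :: "(real \<Rightarrow> real) set" where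
  gen: "g \<in> G \<Longrightarrow> g \<in> gen_algebra G"
| add: "g \<in> gen_algebra G \<Longrightarrow> h \<in> gen_algebra G \<Longrightarrow> (\<lambda>x. g x + h x) \<in> gen_algebra G"
| scale: "g \<in> gen_algebra G \<Longrightarrow> (\<lambda>x. c * g x) \<in> gen_algebra G"
| mult: "g \<in> gen_algebra G \<Longrightarrow> h \<in> gen_algebra G \<Longrightarrow> (\<lambda>x. g x * h x) \<in> gen_algebra G"

definition fscale :: "real \<Rightarrow> (real \<Rightarrow> real) \<Rightarrow> real \<Rightarrow> real" where
  "fscale c g = (\<lambda>x. c * g x)"

end

theory Submission
  imports Defs
begin


lemma isCont_gp:
  fixes c e :: "'i \<Rightarrow> real"
  assumes "t0 > 0"
  shows "isCont (\<lambda>t. \<Sum>i\<in>I. c i * t powr e i) t0"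
  using assms by (intro continuous_intros) auto

lemma deriv_gp:
  fixes c e :: "'i \<Rightarrow> real"
  assumes "z > 0"
  shows "((\<lambda>t. \<Sum>i\<in>I. c i * t powr e i) has_real_derivative (\<Sum>i\<in>I. c i * (e i * z powr (e i - 1)))) (at z)"
  using assms by (intro derivative_eq_intros has_real_derivative_powr) auto

lemma gp_lower:
  fixes c e :: "'i \<Rightarrow> real"
  assumes "finite I" "inj_on e I" "\<exists>i\<in>I. c i \<noteq> 0" "t0 > 0"
  shows "\<exists>k::nat. \<exists>C>0. eventually (\<lambda>t. C * \<bar>t - t0\<bar>^k \<le> \<bar>\<Sum>i\<in>I. c i * t powr e i\<bar>) (at t0)"
  using assms
proof (induction "card I" arbitrary: I c e rule: less_induct)
  case less
  define h where "h = (\<lambda>t. \<Sum>i\<in>I. c i * t powr e i)"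
  show ?case
  proof (cases "h t0 = 0")
    case False
    have "isCont h t0" unfolding h_def using less.prems by (intro isCont_gp) auto
    hence "(h \<longlongrightarrow> h t0) (at t0)" by (simp add: isCont_def)
    hence "((\<lambda>t. \<bar>h t\<bar>) \<longlongrightarrow> \<bar>h t0\<bar>) (at t0)" by (rule tendsto_rabs)
    hence "eventually (\<lambda>t. \<bar>h t\<bar> > \<bar>h t0\<bar>/2) (at t0)"
      using False by (intro order_tendstoD) auto
    hence "eventually (\<lambda>t. \<bar>h t0\<bar>/2 * \<bar>t - t0\<bar>^0 \<le> \<bar>h t\<bar>) (at t0)"
      by eventually_elim auto
    hence "\<exists>k::nat. \<exists>C>0. eventually (\<lambda>t. C * \<bar>t - t0\<bar>^k \<le> \<bar>h t\<bar>) (at t0)"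
      using False by (intro exI[of _ 0] exI[of _ "\<bar>h t0\<bar>/2"]) auto
    thus ?thesis unfolding h_def .
  next
    case True
    from less.prems obtain i1 where i1: "i1 \<in> I" "c i1 \<noteq> 0" by auto
    have "\<exists>i2\<in>I - {i1}. c i2 \<noteq> 0"
    proof (rule ccontr)
      assume "\<not> ?thesis"
      hence "h t0 = c i1 * t0 powr e i1" unfolding h_def
        using less.prems i1 by (subst sum.remove[of I i1]) auto
      thus False using True i1 less.prems by simp
    qed
    then obtain i2 where i2: "i2 \<in> I - {i1}" "c i2 \<noteq> 0" by auto
    define d where "d = (\<lambda>i. c i * (e i - e i1))"
    define e' where "e' = (\<lambda>i. e i - e i1 - 1)"
    define G where "G = (\<lambda>t. \<Sum>i\<in>I - {i1}. d i * t powr e' i)"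
    define g where "g = (\<lambda>t. \<Sum>i\<in>I. c i * t powr (e i - e i1))"
    have "card (I - {i1}) < card I" using i1 less.prems by (meson card_Diff1_less)
    moreover have "inj_on e' (I - {i1})" using less.prems(2) unfolding e'_def inj_on_def by auto
    moreover have "d i2 \<noteq> 0" using i2 less.prems(2) i1 unfolding d_def inj_on_def by auto
    ultimately obtain k C where C: "C > 0" and ev: "eventually (\<lambda>t. C * \<bar>t - t0\<bar>^k \<le> \<bar>G t\<bar>) (at t0)"
      using less.hyps[of "I - {i1}" e' d] less.prems i2 unfolding G_def by fastforce
    have dg: "(g has_real_derivative G z) (at z)" if "z > 0" for z
    proof -
      have "(g has_real_derivative (\<Sum>i\<in>I. c i * ((e i - e i1) * z powr (e i - e i1 - 1)))) (at z)"
        unfolding g_def using that by (rule deriv_gp)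
      moreover have "(\<Sum>i\<in>I. c i * ((e i - e i1) * z powr (e i - e i1 - 1))) = G z"
        unfolding G_def d_def e'_def using less.prems i1 by (subst sum.remove[of I i1]) (auto simp: mult.assoc)
      ultimately show ?thesis by simp
    qed
    have hg: "h t = t powr e i1 * g t" if "t > 0" for t
      unfolding h_def g_def sum_distrib_left
      by (rule sum.cong) (use that in \<open>auto simp: powr_add[symmetric]\<close>)
    have g0: "g t0 = 0" using hg[of t0] True less.prems by simp
    obtain \<delta> where \<delta>: "\<delta> > 0" "\<forall>t. t \<noteq> t0 \<and> dist t t0 < \<delta> \<longrightarrow> C * \<bar>t - t0\<bar>^k \<le> \<bar>G t\<bar>"
      using ev unfolding eventually_at by auto
    define \<phi> where "\<phi> = (\<lambda>s. (s - t0)^(Suc k))"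
    have d\<phi>: "(\<phi> has_real_derivative (Suc k) * (s - t0)^k) (at s)" for s
      unfolding \<phi>_def by (rule derivative_eq_intros refl | simp)+
    have key: "C / Suc k * \<bar>t - t0\<bar>^Suc k \<le> \<bar>g t\<bar>" if t: "t \<noteq> t0" "\<bar>t - t0\<bar> < min \<delta> t0" for t
    proof -
      have "\<exists>\<xi>. \<xi> \<noteq> t0 \<and> \<bar>\<xi> - t0\<bar> < \<bar>t - t0\<bar> \<and> g t * ((Suc k) * (\<xi> - t0)^k) = \<phi> t * G \<xi>"
      proof (cases "t < t0")
        case True
        have "\<exists>\<xi>. t < \<xi> \<and> \<xi> < t0 \<and> (g t0 - g t) * ((Suc k) * (\<xi> - t0)^k) = (\<phi> t0 - \<phi> t) * G \<xi>"
          using True t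
          by (intro GMVT') (auto intro!: DERIV_isCont dg d\<phi>[unfolded of_nat_Suc])
        then obtain \<xi> where "t < \<xi>" "\<xi> < t0" "(g t0 - g t) * ((Suc k) * (\<xi> - t0)^k) = (\<phi> t0 - \<phi> t) * G \<xi>" by blast
        thus ?thesis using g0 True by (intro exI[of _ \<xi>]) (auto simp: \<phi>_def)
      next
        case False
        hence F: "t0 < t" using t by auto
        have "\<exists>\<xi>. t0 < \<xi> \<and> \<xi> < t \<and> (g t - g t0) * ((Suc k) * (\<xi> - t0)^k) = (\<phi> t - \<phi> t0) * G \<xi>"
          using F t less.prems
          by (intro GMVT') (auto intro!: DERIV_isCont dg d\<phi>[unfolded of_nat_Suc])
        then obtain \<xi> where "t0 < \<xi>" "\<xi> < t" "(g t - g t0) * ((Suc k) * (\<xi> - t0)^k) = (\<phi> t - \<phi> t0) * G \<xi>" by blast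
        thus ?thesis using g0 F by (intro exI[of _ \<xi>]) (auto simp: \<phi>_def)
      qed
      then obtain \<xi> where xi: "\<xi> \<noteq> t0" "\<bar>\<xi> - t0\<bar> < \<bar>t - t0\<bar>" "g t * ((Suc k) * (\<xi> - t0)^k) = \<phi> t * G \<xi>" by blast
      have "C * \<bar>\<xi> - t0\<bar>^k \<le> \<bar>G \<xi>\<bar>" using \<delta> xi t by (auto simp: dist_real_def)
      hence "\<bar>t - t0\<bar>^Suc k * (C * \<bar>\<xi> - t0\<bar>^k) \<le> \<bar>t - t0\<bar>^Suc k * \<bar>G \<xi>\<bar>"
        by (intro mult_left_mono) auto
      also have "\<dots> = \<bar>g t\<bar> * (Suc k * \<bar>\<xi> - t0\<bar>^k)"
        using arg_cong[OF xi(3), of abs] by (simp add: \<phi>_def abs_mult power_abs)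
      finally have "(C * \<bar>t - t0\<bar>^Suc k) * \<bar>\<xi> - t0\<bar>^k \<le> (\<bar>g t\<bar> * Suc k) * \<bar>\<xi> - t0\<bar>^k"
        by (simp add: algebra_simps)
      moreover have "\<bar>\<xi> - t0\<bar>^k > 0" using xi by auto
      ultimately have "C * \<bar>t - t0\<bar>^Suc k \<le> \<bar>g t\<bar> * Suc k"
        by (meson mult_le_cancel_right_pos)
      thus ?thesis by (simp add: field_simps)
    qed
    have evg: "eventually (\<lambda>t. C / Suc k * \<bar>t - t0\<bar>^Suc k \<le> \<bar>g t\<bar>) (at t0)"
      unfolding eventually_at
    proof (intro exI[of _ "min \<delta> t0"] conjI ballI impI)
      show "min \<delta> t0 > 0" using \<delta> less.prems by auto
    next
      fix x assume "x \<noteq> t0 \<and> dist x t0 < min \<delta> t0"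
      thus "C / Suc k * \<bar>x - t0\<bar>^Suc k \<le> \<bar>g x\<bar>" by (intro key) (auto simp: dist_real_def)
    qed
    have "isCont (\<lambda>t. t powr e i1) t0" using less.prems by (intro continuous_intros) auto
    hence "((\<lambda>t. t powr e i1) \<longlongrightarrow> t0 powr e i1) (at t0)" by (simp add: isCont_def)
    hence evp: "eventually (\<lambda>t. t powr e i1 > t0 powr e i1 / 2) (at t0)"
      using less.prems by (intro order_tendstoD) auto
    have evpos: "eventually (\<lambda>t. t > 0) (at t0)"
      using order_tendstoD(1)[OF tendsto_ident_at less.prems(4)] by simp
    have "eventually (\<lambda>t. (t0 powr e i1 / 2 * (C / Suc k)) * \<bar>t - t0\<bar>^Suc k \<le> \<bar>h t\<bar>) (at t0)"
      using evg evp evpos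
    proof eventually_elim
      case (elim t)
      have "(t0 powr e i1 / 2 * (C / Suc k)) * \<bar>t - t0\<bar>^Suc k = (t0 powr e i1 / 2) * (C / Suc k * \<bar>t - t0\<bar>^Suc k)" by simp
      also have "\<dots> \<le> t powr e i1 * \<bar>g t\<bar>"
        using elim C by (intro mult_mono) auto
      also have "\<dots> = \<bar>h t\<bar>" using hg[of t] elim by (simp add: abs_mult)
      finally show ?case .
    qed
    thus ?thesis unfolding h_def using C less.prems by (intro exI[of _ "Suc k"] exI[of _ "t0 powr e i1 / 2 * (C / Suc k)"]) auto
  qed
qed



lemma sum_fun_apply: "(\<Sum>v\<in>T. F v) (x::'a) = (\<Sum>v\<in>T. F v x)"
  for F :: "'c \<Rightarrow> 'a \<Rightarrow> 'b::comm_monoid_add"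
  by (induct T rule: infinite_finite_induct) auto

interpretation FS: module fscale
  by unfold_locales (auto simp: fscale_def fun_eq_iff algebra_simps)

lemma nonconst:
  assumes cnh: "completely_non_holder f"
  shows "\<exists>a\<in>{0..1}. \<exists>b\<in>{0..1}. f a \<noteq> (f b::real)"
proof (rule ccontr)
  assume "\<not> ?thesis"
  hence c: "\<forall>y\<in>{0..1}. f y = f 0" by (metis atLeastAtMost_iff order.refl zero_le_one)
  have "eventually (\<lambda>y. ereal (\<bar>f y - f 0\<bar> / \<bar>y - 0\<bar> powr 1) \<le> 0) (at 0 within {0<..1})"
    unfolding eventually_at
  proof (intro exI[of _ 1] conjI ballI impI)
    fix y :: real assume "y \<in> {0<..1}"
    hence "f y = f 0" by (intro c[rule_format]) auto
    thus "ereal (\<bar>f y - f 0\<bar> / \<bar>y - 0\<bar> powr 1) \<le> 0" by simp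
  qed simp
  hence "Limsup (at 0 within {0<..1}) (\<lambda>y. ereal (\<bar>f y - f 0\<bar> / \<bar>y - 0\<bar> powr 1)) \<le> 0"
    by (rule Limsup_bounded)
  hence "holder_right 1 f 0" unfolding holder_right_def
    using order.strict_trans1 by fastforce
  thus False using cnh unfolding completely_non_holder_def by (metis atLeastAtMost_iff order.refl zero_less_one zero_le_one)
qed

lemma fpow_mult: "(\<lambda>x. fpow f a x * fpow f b x) = fpow f (a + b)"
  if "\<forall>x\<in>{0..1}. 0 < f x" for f :: "real \<Rightarrow> real"
  using that by (auto simp: fpow_def fun_eq_iff powr_add)

lemma span_mult:
  fixes f :: "real \<Rightarrow> real"
  assumes pos: "\<forall>x\<in>{0..1}. 0 < f x"
  defines "B \<equiv> {fpow f l | l. l > 0}"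
  assumes g: "g \<in> FS.span B" and h: "h \<in> FS.span B"
  shows "(\<lambda>x. g x * h x) \<in> FS.span B"
proof -
  have base: "(\<lambda>x. g x * b x) \<in> FS.span B" if g: "g \<in> FS.span B" and b: "b \<in> B" for g b
    using g
  proof (induction rule: FS.span_induct)
    case (step x)
    then show ?case using b pos unfolding B_def
      by (auto intro!: FS.span_base simp: fpow_mult)
  next
    case base
    show ?case unfolding FS.subspace_def
    proof (intro conjI ballI allI)
      show "0 \<in> Collect (\<lambda>x. (\<lambda>xa. x xa * b xa) \<in> FS.span B)"
        using FS.span_zero by (simp add: zero_fun_def)
    next
      fix x y assume "x \<in> Collect (\<lambda>x. (\<lambda>xa. x xa * b xa) \<in> FS.span B)" "y \<in> Collect (\<lambda>x. (\<lambda>xa. x xa * b xa) \<in> FS.span B)"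
      from FS.span_add[OF this[simplified]] show "x + y \<in> Collect (\<lambda>x. (\<lambda>xa. x xa * b xa) \<in> FS.span B)"
        by (simp add: plus_fun_def algebra_simps)
    next
      fix c x assume "x \<in> Collect (\<lambda>x. (\<lambda>xa. x xa * b xa) \<in> FS.span B)"
      from FS.span_scale[OF this[simplified], of c] show "fscale c x \<in> Collect (\<lambda>x. (\<lambda>xa. x xa * b xa) \<in> FS.span B)"
        by (simp add: fscale_def algebra_simps)
    qed
  qed
  show ?thesis using h
  proof (induction rule: FS.span_induct)
    case (step x)
    then show ?case using base[OF g] by simp
  next
    case base
    show ?case unfolding FS.subspace_def
    proof (intro conjI ballI allI)
      show "0 \<in> Collect (\<lambda>x. (\<lambda>xa. g xa * x xa) \<in> FS.span B)"
        using FS.span_zero by (simp add: zero_fun_def)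
    next
      fix x y assume "x \<in> Collect (\<lambda>x. (\<lambda>xa. g xa * x xa) \<in> FS.span B)" "y \<in> Collect (\<lambda>x. (\<lambda>xa. g xa * x xa) \<in> FS.span B)"
      from FS.span_add[OF this[simplified]] show "x + y \<in> Collect (\<lambda>x. (\<lambda>xa. g xa * x xa) \<in> FS.span B)"
        by (simp add: plus_fun_def algebra_simps)
    next
      fix c x assume "x \<in> Collect (\<lambda>x. (\<lambda>xa. g xa * x xa) \<in> FS.span B)"
      from FS.span_scale[OF this[simplified], of c] show "fscale c x \<in> Collect (\<lambda>x. (\<lambda>xa. g xa * x xa) \<in> FS.span B)"
        by (simp add: fscale_def algebra_simps)
    qed
  qed
qed

lemma span_eq:
  fixes f :: "real \<Rightarrow> real"
  assumes pos: "\<forall>x\<in>{0..1}. 0 < f x"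
  defines "B \<equiv> {fpow f l | l. l > 0}"
  shows "FS.span B = gen_algebra B"
proof
  show "gen_algebra B \<subseteq> FS.span B"
  proof
    fix g assume "g \<in> gen_algebra B"
    thus "g \<in> FS.span B"
    proof induction
      case (gen g) thus ?case by (rule FS.span_base)
    next
      case (add g h) thus ?case using FS.span_add[of g B h] by (simp add: plus_fun_def)
    next
      case (scale g c)
      hence "fscale c g \<in> FS.span B" by (intro FS.span_scale) auto
      thus ?case by (simp only: fscale_def[of c g])
    next
      case (mult g h) thus ?case using span_mult[OF pos] unfolding B_def by blast
    qed
  qed
next
  have f1: "fpow f 1 \<in> gen_algebra B" unfolding B_def by (auto intro!: gen_algebra.gen)
  show "FS.span B \<subseteq> gen_algebra B"
  proof
    fix g assume "g \<in> FS.span B"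
    thus "g \<in> gen_algebra B"
    proof (induction rule: FS.span_induct)
      case (step x) thus ?case by (rule gen_algebra.gen)
    next
      case base
      show ?case unfolding FS.subspace_def
      proof (intro conjI ballI allI)
        show "0 \<in> Collect (\<lambda>x. x \<in> gen_algebra B)"
          using gen_algebra.scale[OF f1, of 0] by (simp add: zero_fun_def)
      next
        fix x y assume "x \<in> Collect (\<lambda>x. x \<in> gen_algebra B)" "y \<in> Collect (\<lambda>x. x \<in> gen_algebra B)"
        thus "x + y \<in> Collect (\<lambda>x. x \<in> gen_algebra B)"
          using gen_algebra.add[of x B y] by (simp add: plus_fun_def)
      next
        fix c x assume "x \<in> Collect (\<lambda>x. x \<in> gen_algebra B)"
        thus "fscale c x \<in> Collect (\<lambda>x. x \<in> gen_algebra B)"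
          using gen_algebra.scale[of x B c] by (simp add: fscale_def)
      qed
    qed
  qed
qed



lemma inj_fpow:
  fixes f :: "real \<Rightarrow> real"
  assumes pos: "\<forall>x\<in>{0..1}. 0 < f x" and nc: "\<exists>a\<in>{0..1}. \<exists>b\<in>{0..1}. f a \<noteq> f b"
  shows "inj_on (fpow f) {0<..}"
proof (rule inj_onI, rule ccontr)
  fix a b :: real assume ab: "a \<in> {0<..}" "b \<in> {0<..}" "fpow f a = fpow f b" "a \<noteq> b"
  have one: "f x = 1" if x: "x \<in> {0..1}" for x
  proof -
    have fx: "f x > 0" using pos x by auto
    have "f x powr a = f x powr b" using fun_cong[OF ab(3), of x] x by (simp add: fpow_def)
    hence "f x powr (a - b) = 1" using fx by (simp add: powr_diff)
    hence "ln (f x powr (a - b)) = 0" by simp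
    hence "(a - b) * ln (f x) = 0" using pos x by (simp add: ln_powr)
    hence "ln (f x) = 0" using ab by simp
    thus ?thesis using pos x by simp
  qed
  from nc obtain a' b' where "a' \<in> {0..1}" "b' \<in> {0..1}" "f a' \<noteq> f b'" by auto
  thus False using one by metis
qed

lemma rep:
  fixes f :: "real \<Rightarrow> real"
  assumes inj: "inj_on (fpow f) {0<..}"
    and T: "finite T" "T \<subseteq> {fpow f l | l. l > 0}"
  shows "\<exists>S c. finite S \<and> S \<subseteq> {0<..} \<and>
     (\<forall>x\<in>{0..1}. (\<Sum>v\<in>T. fscale (u v) v) x = (\<Sum>l\<in>S. c l * f x powr l)) \<and>
     ((\<exists>v\<in>T. u v \<noteq> 0) \<longrightarrow> (\<exists>l\<in>S. c l \<noteq> 0))"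
proof -
  define S where "S = {l. l > 0 \<and> fpow f l \<in> T}"
  have TS: "T = fpow f ` S" using T(2) unfolding S_def by auto
  have injS: "inj_on (fpow f) S" using inj by (rule inj_on_subset) (auto simp: S_def)
  have fin: "finite S" using T(1) TS injS finite_imageD by metis
  show ?thesis
  proof (intro exI[of _ S] exI[of _ "\<lambda>l. u (fpow f l)"] conjI ballI impI)
    show "S \<subseteq> {0<..}" by (auto simp: S_def)
  next
    fix x :: real assume x: "x \<in> {0..1}"
    have "(\<Sum>v\<in>T. fscale (u v) v) x = (\<Sum>v\<in>T. u v * v x)"
      by (simp add: sum_fun_apply fscale_def)
    also have "\<dots> = (\<Sum>l\<in>S. u (fpow f l) * fpow f l x)"
      unfolding TS by (simp add: sum.reindex[OF injS])
    also have "\<dots> = (\<Sum>l\<in>S. u (fpow f l) * f x powr l)"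
      using x by (simp add: fpow_def)
    finally show "(\<Sum>v\<in>T. fscale (u v) v) x = (\<Sum>l\<in>S. u (fpow f l) * f x powr l)" .
  next
    assume "\<exists>v\<in>T. u v \<noteq> 0"
    thus "\<exists>l\<in>S. u (fpow f l) \<noteq> 0" unfolding TS by auto
  qed (use fin in auto)
qed

lemma range_nbhd:
  fixes f :: "real \<Rightarrow> real"
  assumes cont: "continuous_on {0..1} f" and nc: "\<exists>a\<in>{0..1}. \<exists>b\<in>{0..1}. f a \<noteq> f b"
  shows "\<exists>t0 r. r > 0 \<and> (\<forall>t. \<bar>t - t0\<bar> < r \<longrightarrow> (\<exists>x\<in>{0..1}. f x = t))"
proof -
  from nc obtain a b where ab: "a \<in> {0..1}" "b \<in> {0..1}" "f a < f b"
    by (metis linorder_neqE_linordered_idom)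
  have "connected (f ` {0..1})" using cont by (intro connected_continuous_image) auto
  hence sub: "{f a..f b} \<subseteq> f ` {0..1}" using ab by (intro connected_contains_Icc) auto
  have "\<forall>t. \<bar>t - (f a + f b) / 2\<bar> < (f b - f a) / 2 \<longrightarrow> (\<exists>x\<in>{0..1}. f x = t)"
  proof (intro allI impI)
    fix t :: real assume "\<bar>t - (f a + f b) / 2\<bar> < (f b - f a) / 2"
    hence "t \<in> {f a..f b}" by (auto simp: abs_less_iff field_simps)
    thus "\<exists>x\<in>{0..1}. f x = t" using sub by auto
  qed
  moreover have "(f b - f a) / 2 > 0" using ab by auto
  ultimately show ?thesis by blast
qed

lemma indep:
  fixes f :: "real \<Rightarrow> real"
  assumes cont: "continuous_on {0..1} f" and pos: "\<forall>x\<in>{0..1}. 0 < f x"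
    and nc: "\<exists>a\<in>{0..1}. \<exists>b\<in>{0..1}. f a \<noteq> f b"
  shows "\<not> FS.dependent {fpow f l | l. l > 0}"
proof
  assume "FS.dependent {fpow f l | l. l > 0}"
  then obtain T u where T: "finite T" "T \<subseteq> {fpow f l | l. l > 0}" "(\<Sum>v\<in>T. fscale (u v) v) = 0" "\<exists>v\<in>T. u v \<noteq> 0"
    unfolding FS.dependent_explicit by blast
  obtain S c where S: "finite S" "S \<subseteq> {0<..}"
      "\<forall>x\<in>{0..1}. (\<Sum>v\<in>T. fscale (u v) v) x = (\<Sum>l\<in>S. c l * f x powr l)" "\<exists>l\<in>S. c l \<noteq> 0"
    using rep[OF inj_fpow[OF pos nc] T(1,2), of u] T(4) by blast
  have zero: "(\<Sum>l\<in>S. c l * f x powr l) = 0" if "x \<in> {0..1}" for x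
    using S(3) that T(3) by (metis zero_fun_apply)
  obtain t0 r where r: "r > 0" "\<forall>t. \<bar>t - t0\<bar> < r \<longrightarrow> (\<exists>x\<in>{0..1}. f x = t)"
    using range_nbhd[OF cont nc] by blast
  have t0pos: "t0 > 0" using r pos by (metis abs_zero diff_self)
  obtain k C where C: "C > 0" "eventually (\<lambda>t. C * \<bar>t - t0\<bar>^k \<le> \<bar>\<Sum>l\<in>S. c l * t powr l\<bar>) (at t0)"
    using gp_lower[of S id c t0] S t0pos by auto
  have ev2: "eventually (\<lambda>t. \<bar>t - t0\<bar> < r) (at t0)"
    unfolding eventually_at using r by (intro exI[of _ r]) (auto simp: dist_real_def)
  have "eventually (\<lambda>t. False) (at t0)"
    using C(2) ev2 eventually_neq_at_within[of t0 t0 UNIV]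
  proof eventually_elim
    case (elim t)
    then obtain x where "x \<in> {0..1}" "f x = t" using r by blast
    hence "(\<Sum>l\<in>S. c l * t powr l) = 0" using zero by blast
    moreover have "C * \<bar>t - t0\<bar>^k > 0" using C elim by auto
    ultimately show False using elim by auto
  qed
  thus False by simp
qed

lemma eqpoll_B:
  fixes f :: "real \<Rightarrow> real"
  assumes inj: "inj_on (fpow f) {0<..}"
  shows "{fpow f l | l. l > 0} \<approx> (UNIV :: real set)"
proof -
  have eq: "{fpow f l | l. l > 0} = fpow f ` {0<..}" by auto
  have "{0::real<..} \<approx> {fpow f l | l. l > (0::real)}"
    unfolding eqpoll_def eq by (intro exI[of _ "fpow f"] inj_on_imp_bij_betw[OF inj])
  moreover have "{0::real<..} \<approx> (UNIV :: real set)"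
    unfolding eqpoll_def
  proof (intro exI[of _ ln] bij_betwI')
    fix y :: real show "\<exists>x\<in>{0<..}. y = ln x" by (intro bexI[of _ "exp y"]) auto
  qed auto
  ultimately show ?thesis by (meson eqpoll_sym eqpoll_trans)
qed



lemma deriv_lip:
  fixes g :: "real \<Rightarrow> real"
  assumes "(g has_real_derivative D) (at x0 within S)"
  shows "eventually (\<lambda>y. \<bar>g y - g x0\<bar> \<le> (\<bar>D\<bar> + 1) * \<bar>y - x0\<bar>) (at x0 within S)"
proof -
  have "((\<lambda>y. (g y - g x0) / (y - x0)) \<longlongrightarrow> D) (at x0 within S)"
    using assms by (simp add: has_field_derivative_iff)
  hence "((\<lambda>y. \<bar>(g y - g x0) / (y - x0)\<bar>) \<longlongrightarrow> \<bar>D\<bar>) (at x0 within S)"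
    by (rule tendsto_rabs)
  hence "eventually (\<lambda>y. \<bar>(g y - g x0) / (y - x0)\<bar> < \<bar>D\<bar> + 1) (at x0 within S)"
    by (rule order_tendstoD) simp
  thus ?thesis using eventually_neq_at_within[of x0 x0 S]
  proof eventually_elim
    case (elim y)
    hence "\<bar>g y - g x0\<bar> / \<bar>y - x0\<bar> \<le> \<bar>D\<bar> + 1" by (simp add: abs_divide)
    thus ?case using elim by (simp add: divide_le_eq)
  qed
qed

lemma holder_from_lip:
  fixes f g :: "real \<Rightarrow> real"
  assumes cont: "continuous_on {0..1} f" and pos: "\<forall>x\<in>{0..1}. 0 < f x"
    and S: "finite S" "S \<subseteq> {0<..}"
    and rep: "\<forall>x\<in>{0..1}. g x = (\<Sum>l\<in>S. c l * f x powr l)"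
    and nz: "\<exists>l\<in>S. c l \<noteq> 0"
    and x0: "x0 \<in> {0..1}" and Tsub: "T \<subseteq> {0..1}"
    and lip: "eventually (\<lambda>y. \<bar>g y - g x0\<bar> \<le> K * \<bar>y - x0\<bar>) (at x0 within T)"
  shows "\<exists>\<alpha>>0. Limsup (at x0 within T) (\<lambda>y. ereal (\<bar>f y - f x0\<bar> / \<bar>y - x0\<bar> powr \<alpha>)) < \<infinity>"
proof -
  define t0 where "t0 = f x0"
  have t0: "t0 > 0" using pos x0 by (simp add: t0_def)
  define P where "P = (\<lambda>t. \<Sum>l\<in>S. c l * t powr l)"
  define cc where "cc = (\<lambda>l. if l = 0 then - P t0 else c l)"
  have 0: "0 \<notin> S" using S by auto
  have "\<exists>i\<in>insert 0 S. cc i \<noteq> 0" using nz 0 unfolding cc_def by (metis insertCI)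
  then obtain k C where C: "C > 0" and ev: "eventually (\<lambda>t. C * \<bar>t - t0\<bar>^k \<le> \<bar>\<Sum>l\<in>insert 0 S. cc l * t powr id l\<bar>) (at t0)"
    using gp_lower[of "insert 0 S" id cc t0] S t0 by auto
  have evpos: "eventually (\<lambda>t. t > 0) (at t0)"
    using order_tendstoD(1)[OF tendsto_ident_at t0] by simp
  have ev1: "eventually (\<lambda>t. \<bar>t - t0\<bar> < 1) (at t0)"
    unfolding eventually_at by (intro exI[of _ 1]) (auto simp: dist_real_def)
  have "eventually (\<lambda>t. C * \<bar>t - t0\<bar>^Suc k \<le> \<bar>P t - P t0\<bar>) (at t0)"
    using ev evpos ev1
  proof eventually_elim
    case (elim t)
    have "(\<Sum>l\<in>insert 0 S. cc l * t powr id l) = cc 0 * t powr 0 + (\<Sum>l\<in>S. cc l * t powr l)"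
      using S 0 by (simp add: sum.insert)
    also have "(\<Sum>l\<in>S. cc l * t powr l) = P t" unfolding P_def cc_def
      using 0 by (intro sum.cong) auto
    finally have eq: "(\<Sum>l\<in>insert 0 S. cc l * t powr id l) = P t - P t0"
      using elim by (simp add: cc_def)
    have le: "\<bar>t - t0\<bar>^Suc k \<le> \<bar>t - t0\<bar>^k"
      using elim by (simp add: mult_left_le_one_le)
    have "C * \<bar>t - t0\<bar>^Suc k \<le> C * \<bar>t - t0\<bar>^k" using C le by (intro mult_left_mono) auto
    also have "\<dots> \<le> \<bar>P t - P t0\<bar>" using elim(1) eq by simp
    finally show ?case .
  qed
  then obtain \<delta> where \<delta>: "\<delta> > 0" "\<forall>t. t \<noteq> t0 \<and> dist t t0 < \<delta> \<longrightarrow> C * \<bar>t - t0\<bar>^Suc k \<le> \<bar>P t - P t0\<bar>"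
    unfolding eventually_at by auto
  have keyP: "C * \<bar>t - t0\<bar>^Suc k \<le> \<bar>P t - P t0\<bar>" if "\<bar>t - t0\<bar> < \<delta>" for t
    using \<delta> that by (cases "t = t0") (auto simp: dist_real_def)
  have "(f \<longlongrightarrow> f x0) (at x0 within {0..1})"
    using cont x0 unfolding continuous_on_def by auto
  hence "(f \<longlongrightarrow> t0) (at x0 within T)" unfolding t0_def
    using Tsub by (rule tendsto_within_subset)
  hence evf: "eventually (\<lambda>y. dist (f y) t0 < \<delta>) (at x0 within T)"
    using \<delta>(1) by (rule tendstoD)
  have evT: "eventually (\<lambda>y. y \<in> T) (at x0 within T)"
    unfolding eventually_at by (intro exI[of _ 1]) auto
  define \<alpha> where "\<alpha> = 1 / real (Suc k)"
  define K' where "K' = max K 0"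
  define M where "M = (K' / C) powr \<alpha>"
  have \<alpha>: "\<alpha> > 0" by (simp add: \<alpha>_def)
  have "eventually (\<lambda>y. ereal (\<bar>f y - f x0\<bar> / \<bar>y - x0\<bar> powr \<alpha>) \<le> ereal M) (at x0 within T)"
    using evf evT lip
  proof eventually_elim
    case (elim y)
    show ?case
    proof (cases "y = x0")
      case True thus ?thesis by (simp add: M_def)
    next
      case False
      have y01: "y \<in> {0..1}" using elim Tsub by auto
      define u where "u = \<bar>f y - t0\<bar>"
      have u0: "u \<ge> 0" by (simp add: u_def)
      have "C * u^Suc k \<le> \<bar>P (f y) - P t0\<bar>" unfolding u_def
        using keyP elim by (simp add: dist_real_def)
      also have "\<bar>P (f y) - P t0\<bar> = \<bar>g y - g x0\<bar>"
        using rep y01 x0 by (simp add: P_def t0_def)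
      also have "\<dots> \<le> K' * \<bar>y - x0\<bar>"
        using elim by (smt (verit, best) K'_def abs_ge_zero mult_right_mono)
      finally have "u^Suc k \<le> (K' / C) * \<bar>y - x0\<bar>"
        using C by (simp add: field_simps)
      hence "(u^Suc k) powr \<alpha> \<le> ((K' / C) * \<bar>y - x0\<bar>) powr \<alpha>"
        using \<alpha> u0 by (intro powr_mono2) auto
      moreover have "(u^Suc k) powr \<alpha> = u"
      proof (cases "u = 0")
        case True thus ?thesis by simp
      next
        case False
        hence "u > 0" using u0 by auto
        hence "(u^Suc k) powr \<alpha> = (u powr real (Suc k)) powr \<alpha>" using powr_realpow[of u "Suc k"] by simp
        also have "\<dots> = u" using \<open>u > 0\<close> by (simp add: powr_powr \<alpha>_def)
        finally show ?thesis .
      qed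
      moreover have "((K' / C) * \<bar>y - x0\<bar>) powr \<alpha> = M * \<bar>y - x0\<bar> powr \<alpha>"
        unfolding M_def by (rule powr_mult)
      ultimately have "u \<le> M * \<bar>y - x0\<bar> powr \<alpha>" by simp
      moreover have "\<bar>y - x0\<bar> powr \<alpha> > 0" using False by simp
      ultimately show ?thesis by (simp add: u_def t0_def divide_le_eq)
    qed
  qed
  hence "Limsup (at x0 within T) (\<lambda>y. ereal (\<bar>f y - f x0\<bar> / \<bar>y - x0\<bar> powr \<alpha>)) \<le> ereal M"
    by (rule Limsup_bounded)
  hence "Limsup (at x0 within T) (\<lambda>y. ereal (\<bar>f y - f x0\<bar> / \<bar>y - x0\<bar> powr \<alpha>)) < \<infinity>"
    using order.strict_trans1 by fastforce
  thus ?thesis using \<alpha> by blast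
qed



theorem mainTheorem2:
  fixes f :: "real \<Rightarrow> real"
  assumes cont: "continuous_on {0..1} f"
    and pos: "\<forall>x\<in>{0..1}. 0 < f x"
    and cnh: "completely_non_holder f"
  defines "\<A> \<equiv> gen_algebra {fpow f l | l. l > 0}"
  shows "(\<exists>B \<subseteq> \<A>. \<not> module.dependent fscale B \<and> module.span fscale B = \<A>
              \<and> B \<approx> (UNIV :: real set))
       \<and> (\<forall>g\<in>\<A>. (\<exists>x\<in>{0..1}. g x \<noteq> 0) \<longrightarrow>
           \<not> (\<exists>x0 D. (x0 \<in> {0..<1} \<and> (g has_real_derivative D) (at x0 within {x0..1}))
                    \<or> (x0 \<in> {0<..1} \<and> (g has_real_derivative D) (at x0 within {0..x0}))))"
proof
  define B where "B = {fpow f l | l. l > 0}"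
  have nc: "\<exists>a\<in>{0..1}. \<exists>b\<in>{0..1}. f a \<noteq> f b" using nonconst[OF cnh] .
  have spanA: "FS.span B = \<A>" unfolding \<A>_def B_def by (rule span_eq[OF pos])
  show "\<exists>B \<subseteq> \<A>. \<not> module.dependent fscale B \<and> module.span fscale B = \<A> \<and> B \<approx> (UNIV :: real set)"
  proof (intro exI[of _ B] conjI)
    show "B \<subseteq> \<A>" unfolding \<A>_def B_def by (auto intro: gen_algebra.gen)
    show "\<not> FS.dependent B" unfolding B_def by (rule indep[OF cont pos nc])
    show "FS.span B = \<A>" by (rule spanA)
    show "B \<approx> (UNIV :: real set)" unfolding B_def by (rule eqpoll_B[OF inj_fpow[OF pos nc]])
  qed
  show "\<forall>g\<in>\<A>. (\<exists>x\<in>{0..1}. g x \<noteq> 0) \<longrightarrow>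
           \<not> (\<exists>x0 D. (x0 \<in> {0..<1} \<and> (g has_real_derivative D) (at x0 within {x0..1}))
                    \<or> (x0 \<in> {0<..1} \<and> (g has_real_derivative D) (at x0 within {0..x0})))"
  proof (intro ballI impI notI)
    fix g assume gA: "g \<in> \<A>" and gnz: "\<exists>x\<in>{0..1}. g x \<noteq> 0"
    assume der: "\<exists>x0 D. (x0 \<in> {0..<1} \<and> (g has_real_derivative D) (at x0 within {x0..1}))
                    \<or> (x0 \<in> {0<..1} \<and> (g has_real_derivative D) (at x0 within {0..x0}))"
    from gA spanA obtain T u where T: "finite T" "T \<subseteq> B" "g = (\<Sum>v\<in>T. fscale (u v) v)"
      unfolding FS.span_explicit by blast
    obtain S c where S: "finite S" "S \<subseteq> {0<..}"
        "\<forall>x\<in>{0..1}. (\<Sum>v\<in>T. fscale (u v) v) x = (\<Sum>l\<in>S. c l * f x powr l)"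
      using rep[OF inj_fpow[OF pos nc] T(1), of u] T(2) unfolding B_def by blast
    have repg: "\<forall>x\<in>{0..1}. g x = (\<Sum>l\<in>S. c l * f x powr l)" using S(3) T(3) by simp
    have nz: "\<exists>l\<in>S. c l \<noteq> 0"
    proof (rule ccontr)
      assume "\<not> ?thesis"
      hence "\<forall>x\<in>{0..1}. g x = 0" using repg by simp
      thus False using gnz by blast
    qed
    from der obtain x0 D where
      "(x0 \<in> {0..<1} \<and> (g has_real_derivative D) (at x0 within {x0..1}))
                    \<or> (x0 \<in> {0<..1} \<and> (g has_real_derivative D) (at x0 within {0..x0}))" by blast
    thus False
    proof
      assume a: "x0 \<in> {0..<1} \<and> (g has_real_derivative D) (at x0 within {x0..1})"
      have "eventually (\<lambda>y. \<bar>g y - g x0\<bar> \<le> (\<bar>D\<bar> + 1) * \<bar>y - x0\<bar>) (at x0 within {x0..1})"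
        using a by (intro deriv_lip) auto
      hence "eventually (\<lambda>y. \<bar>g y - g x0\<bar> \<le> (\<bar>D\<bar> + 1) * \<bar>y - x0\<bar>) (at x0 within {x0<..1})"
        by (rule filter_leD[OF at_le, rotated]) auto
      hence "\<exists>\<alpha>>0. Limsup (at x0 within {x0<..1}) (\<lambda>y. ereal (\<bar>f y - f x0\<bar> / \<bar>y - x0\<bar> powr \<alpha>)) < \<infinity>"
        by (rule holder_from_lip[OF cont pos S(1,2) repg nz, rotated 2]) (use a in auto)
      then obtain \<alpha> where "\<alpha> > 0" "holder_right \<alpha> f x0"
        unfolding holder_right_def by blast
      thus False using cnh a unfolding completely_non_holder_def by auto
    next
      assume a: "x0 \<in> {0<..1} \<and> (g has_real_derivative D) (at x0 within {0..x0})"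
      have "eventually (\<lambda>y. \<bar>g y - g x0\<bar> \<le> (\<bar>D\<bar> + 1) * \<bar>y - x0\<bar>) (at x0 within {0..x0})"
        using a by (intro deriv_lip) auto
      hence "eventually (\<lambda>y. \<bar>g y - g x0\<bar> \<le> (\<bar>D\<bar> + 1) * \<bar>y - x0\<bar>) (at x0 within {0..<x0})"
        by (rule filter_leD[OF at_le, rotated]) auto
      hence "\<exists>\<alpha>>0. Limsup (at x0 within {0..<x0}) (\<lambda>y. ereal (\<bar>f y - f x0\<bar> / \<bar>y - x0\<bar> powr \<alpha>)) < \<infinity>"
        by (rule holder_from_lip[OF cont pos S(1,2) repg nz, rotated 2]) (use a in auto)
      then obtain \<alpha> where "\<alpha> > 0" "holder_left \<alpha> f x0"
        unfolding holder_left_def by blast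
      thus False using cnh a unfolding completely_non_holder_def by auto
    qed
  qed
qed


end
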